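(* Let $r\ge4$, $l\ge r$, $\alpha,\beta\in\mathbb N$ with $\alpha+\beta=l-(r-2)$, and let $(X(N_G,\Delta_G),\mathrm{orb}(\sigma_0))$ be the Gorenstein cyclic quotient singularity of type $\frac1l(1,\ldots,1,\alpha,\beta)$ (with $r-2$ weights equal to $1$). If this singularity admits a $T_{N_G}$-equivariant, crepant, full resolution, then $\gcd(\alpha,\beta,l)\in\{1,r-2\}$. Moreover, if $\gcd(\alpha,\beta,l)=1$, then $[\mathfrak t_1]_{r-2}=[\mathfrak t_2]_{r-2}=1$, where $\mathfrak t_1=\gcd(\alpha,l)$ and $\mathfrak t_2=\gcd(\beta,l)=\gcd(\alpha+(r-2),l)$.
   Context: For integers $\mu$ and $\nu\ge1$, $[\mu]_\nu$ is the unique integer in $\{0,\ldots,\nu-1\}$ congruent to $\mu$ mod $\nu$. Type $\frac1l(\alpha_1,\ldots,\alpha_r)$: $G\subset\mathrm{GL}(r,\mathbb C)$ is generated by $\mathrm{diag}(\zeta^{\alpha_1},\ldots,\zeta^{\alpha_r})$, $\zeta=e^{2\pi\sqrt{-1}/l}$; $N_G=\mathbb Z^r+\mathbb Z\frac1l(\alpha_1,\ldots,\alpha_r)^{\intercal}$, $\sigma_0$ the positive orthant of $\mathbb R^r$, $\Delta_G$ its face fan, $X(N_G,\Delta_G)=\mathbb C^r/G$ with torus $T_{N_G}$. A crepant $T_{N_G}$-equivariant full resolution is a proper birational toric morphism from a smooth toric variety given by a refinement of $\Delta_G$, with trivial discrepancy. *)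

theory Defs
  imports Complex_Main
begin

text \<open>Vectors of R^r are modelled as functions nat => real vanishing at indices >= r.\<close>

definition vsp :: "nat \<Rightarrow> (nat \<Rightarrow> real) set" where
  "vsp r = {v. \<forall>i\<ge>r. v i = 0}"

definition zero_vec :: "nat \<Rightarrow> real" where
  "zero_vec = (\<lambda>i. 0)"

definition pairing :: "nat \<Rightarrow> (nat \<Rightarrow> real) \<Rightarrow> (nat \<Rightarrow> real) \<Rightarrow> real" where
  "pairing r m v = (\<Sum>i<r. m i * v i)"

definition type_weights :: "nat \<Rightarrow> nat \<Rightarrow> nat \<Rightarrow> nat \<Rightarrow> nat" where
  "type_weights r \<alpha> \<beta> i =
     (if i < r - 2 then 1 else if i = r - 2 then \<alpha> else if i = r - 1 then \<beta> else 0)"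

definition lattice_NG :: "nat \<Rightarrow> nat \<Rightarrow> (nat \<Rightarrow> nat) \<Rightarrow> (nat \<Rightarrow> real) set" where
  "lattice_NG r l a = {v \<in> vsp r. \<exists>k::int. \<forall>i<r.
       v i - real_of_int k * real (a i) / real l \<in> \<int>}"

definition pos_orthant :: "nat \<Rightarrow> (nat \<Rightarrow> real) set" where
  "pos_orthant r = {v \<in> vsp r. \<forall>i<r. 0 \<le> v i}"

definition cone_gen :: "(nat \<Rightarrow> real) set \<Rightarrow> (nat \<Rightarrow> real) set" where
  "cone_gen S = {v. \<exists>c. (\<forall>s\<in>S. 0 \<le> c s) \<and> v = (\<lambda>i. \<Sum>s\<in>S. c s * s i)}"

definition cone_face :: "nat \<Rightarrow> (nat \<Rightarrow> real) set \<Rightarrow> (nat \<Rightarrow> real) set \<Rightarrow> bool" where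
  "cone_face r \<tau> \<sigma> \<longleftrightarrow> (\<exists>u\<in>vsp r. (\<forall>v\<in>\<sigma>. 0 \<le> pairing r u v) \<and>
       \<tau> = \<sigma> \<inter> {v. pairing r u v = 0})"

definition rational_cone :: "(nat \<Rightarrow> real) set \<Rightarrow> (nat \<Rightarrow> real) set \<Rightarrow> bool" where
  "rational_cone N \<sigma> \<longleftrightarrow> (\<exists>S. finite S \<and> S \<subseteq> N \<and> \<sigma> = cone_gen S)"

definition strongly_convex :: "(nat \<Rightarrow> real) set \<Rightarrow> bool" where
  "strongly_convex \<sigma> \<longleftrightarrow> (\<forall>v. v \<in> \<sigma> \<and> (\<lambda>i. - v i) \<in> \<sigma> \<longrightarrow> v = zero_vec)"

definition is_fan :: "nat \<Rightarrow> (nat \<Rightarrow> real) set \<Rightarrow> (nat \<Rightarrow> real) set set \<Rightarrow> bool" where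
  "is_fan r N \<Delta> \<longleftrightarrow> finite \<Delta> \<and>
     (\<forall>\<sigma>\<in>\<Delta>. rational_cone N \<sigma> \<and> strongly_convex \<sigma> \<and> (\<forall>\<tau>. cone_face r \<tau> \<sigma> \<longrightarrow> \<tau> \<in> \<Delta>)) \<and>
     (\<forall>\<sigma>\<in>\<Delta>. \<forall>\<tau>\<in>\<Delta>. cone_face r (\<sigma> \<inter> \<tau>) \<sigma> \<and> cone_face r (\<sigma> \<inter> \<tau>) \<tau>)"

definition face_fan :: "nat \<Rightarrow> (nat \<Rightarrow> real) set \<Rightarrow> (nat \<Rightarrow> real) set set" where
  "face_fan r \<sigma> = {\<tau>. cone_face r \<tau> \<sigma>}"

text \<open>Refinement with the same support (proper birational toric morphism).\<close>

definition refines :: "(nat \<Rightarrow> real) set set \<Rightarrow> (nat \<Rightarrow> real) set set \<Rightarrow> bool" where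
  "refines \<Delta> \<Delta>' \<longleftrightarrow> (\<forall>\<sigma>\<in>\<Delta>. \<exists>\<tau>\<in>\<Delta>'. \<sigma> \<subseteq> \<tau>) \<and> \<Union>\<Delta> = \<Union>\<Delta>'"

definition lattice_basis :: "(nat \<Rightarrow> real) set \<Rightarrow> (nat \<Rightarrow> real) set \<Rightarrow> bool" where
  "lattice_basis N B \<longleftrightarrow> finite B \<and> B \<subseteq> N \<and>
     (\<forall>v\<in>N. \<exists>c::(nat \<Rightarrow> real) \<Rightarrow> int. v = (\<lambda>i. \<Sum>b\<in>B. real_of_int (c b) * b i)) \<and>
     (\<forall>c::(nat \<Rightarrow> real) \<Rightarrow> real. (\<lambda>i. \<Sum>b\<in>B. c b * b i) = zero_vec \<longrightarrow> (\<forall>b\<in>B. c b = 0))"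

definition smooth_fan :: "(nat \<Rightarrow> real) set \<Rightarrow> (nat \<Rightarrow> real) set set \<Rightarrow> bool" where
  "smooth_fan N \<Delta> \<longleftrightarrow> (\<forall>\<sigma>\<in>\<Delta>. \<exists>B S. lattice_basis N B \<and> S \<subseteq> B \<and> \<sigma> = cone_gen S)"

definition is_ray :: "(nat \<Rightarrow> real) set \<Rightarrow> bool" where
  "is_ray \<rho> \<longleftrightarrow> (\<exists>u. u \<noteq> zero_vec \<and> \<rho> = cone_gen {u})"

definition prim_gen :: "(nat \<Rightarrow> real) set \<Rightarrow> (nat \<Rightarrow> real) set \<Rightarrow> (nat \<Rightarrow> real) \<Rightarrow> bool" where
  "prim_gen N \<rho> u \<longleftrightarrow> u \<in> N \<and> u \<noteq> zero_vec \<and> \<rho> = cone_gen {u} \<and>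
     (\<forall>v\<in>\<rho> \<inter> N. \<exists>k::nat. v = (\<lambda>i. real k * u i))"

text \<open>The canonical divisor -K = sum of the toric prime
  divisors of X(N,Delta_G) is given on sigma_0 by a linear form m with m(u_rho) = 1 for
  the primitive generators of the rays of sigma_0; the discrepancy of the toric divisor
  D_rho of the refinement is m(u_rho) - 1.\<close>

definition crepant :: "nat \<Rightarrow> (nat \<Rightarrow> real) set \<Rightarrow> (nat \<Rightarrow> real) set set \<Rightarrow> (nat \<Rightarrow> real) set set \<Rightarrow> bool" where
  "crepant r N \<Delta>G \<Delta> \<longleftrightarrow> (\<exists>m\<in>vsp r.
     (\<forall>\<rho>\<in>\<Delta>G. \<forall>u. is_ray \<rho> \<and> prim_gen N \<rho> u \<longrightarrow> pairing r m u = 1) \<and>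
     (\<forall>\<rho>\<in>\<Delta>. \<forall>u. is_ray \<rho> \<and> prim_gen N \<rho> u \<longrightarrow> pairing r m u - 1 = 0))"

definition has_crepant_full_resolution :: "nat \<Rightarrow> nat \<Rightarrow> (nat \<Rightarrow> nat) \<Rightarrow> bool" where
  "has_crepant_full_resolution r l a \<longleftrightarrow>
     (let N = lattice_NG r l a; \<Delta>G = face_fan r (pos_orthant r) in
      \<exists>\<Delta>. is_fan r N \<Delta> \<and> refines \<Delta> \<Delta>G \<and> smooth_fan N \<Delta> \<and> crepant r N \<Delta>G \<Delta>)"

end

theory Submission
  imports Defs
begin

definition unitv :: "nat \<Rightarrow> nat \<Rightarrow> real" where
  "unitv i = (\<lambda>j. if j = i then 1 else 0)"

lemma unitv_NG: "i < r \<Longrightarrow> unitv i \<in> lattice_NG r l a"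
  unfolding lattice_NG_def vsp_def unitv_def
  by (auto intro!: exI[of _ 0])

lemma NG_vsp: "lattice_NG r l a \<subseteq> vsp r"
  unfolding lattice_NG_def by auto

lemma vsp_expand:
  assumes "w \<in> vsp r"
  shows "w = (\<lambda>j. \<Sum>i<r. w i * unitv i j)"
proof
  fix j show "w j = (\<Sum>i<r. w i * unitv i j)"
  proof (cases "j < r")
    case True then show ?thesis by (simp add: unitv_def if_distrib cong: if_cong)
  next
    case False then show ?thesis using assms by (simp add: unitv_def vsp_def)
  qed
qed

lemma pairing_lin:
  "pairing r U (\<lambda>i. c * w i) = c * pairing r U w"
  unfolding pairing_def by (simp add: sum_distrib_left mult_ac)

lemma cone_gen_single: "w \<in> cone_gen {s} \<longleftrightarrow> (\<exists>c0\<ge>0. w = (\<lambda>i. c0 * s i))"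
  unfolding cone_gen_def
proof safe
  fix c :: "(nat \<Rightarrow> real) \<Rightarrow> real" assume "\<forall>s'\<in>{s}. 0 \<le> c s'"
  then show "\<exists>c0\<ge>0. (\<lambda>i. \<Sum>s\<in>{s}. c s * s i) = (\<lambda>i. c0 * s i)" by auto
next
  fix c0 :: real assume "0 \<le> c0"
  then show "\<exists>c. (\<forall>s\<in>{s}. 0 \<le> c s) \<and> (\<lambda>i. c0 * s i) = (\<lambda>i. \<Sum>s\<in>{s}. c s * s i)"
    by (intro exI[of _ "\<lambda>_. c0"]) auto
qed

lemma sum_single_coef:
  assumes "finite S" "s \<in> S"
  shows "(\<lambda>i. \<Sum>s'\<in>S. (if s' = s then c1 else 0) * s' i) = (\<lambda>i. c1 * (s i :: real))"
proof
  fix i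
  have "(\<Sum>s'\<in>S. (if s' = s then c1 else 0) * s' i) = (\<Sum>s'\<in>S. if s' = s then c1 * s i else 0)"
    by (intro sum.cong) auto
  then show "(\<Sum>s'\<in>S. (if s' = s then c1 else 0) * s' i) = c1 * s i" using assms by simp
qed

lemma dual_exists:
  assumes LB: "lattice_basis N B" and NV: "N \<subseteq> vsp r" and E: "\<forall>i<r. unitv i \<in> N"
  shows "\<exists>u. (\<forall>x. \<forall>b\<in>B. pairing r (u b) (\<lambda>i. \<Sum>b'\<in>B. x b' * b' i) = x b)"
proof -
  have fin: "finite B" and BN: "B \<subseteq> N"
   and sp: "\<forall>v\<in>N. \<exists>c::(nat \<Rightarrow> real) \<Rightarrow> int. v = (\<lambda>i. \<Sum>b\<in>B. real_of_int (c b) * b i)"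
   and li: "\<forall>c::(nat \<Rightarrow> real) \<Rightarrow> real. (\<lambda>i. \<Sum>b\<in>B. c b * b i) = zero_vec \<longrightarrow> (\<forall>b\<in>B. c b = 0)"
    using LB unfolding lattice_basis_def by auto
  have "\<forall>i. \<exists>c::(nat \<Rightarrow> real) \<Rightarrow> int. i < r \<longrightarrow> unitv i = (\<lambda>j. \<Sum>b\<in>B. real_of_int (c b) * b j)"
    using sp E by metis
  then obtain Ec where Ec: "\<And>i. i < r \<Longrightarrow> unitv i = (\<lambda>j. \<Sum>b\<in>B. real_of_int (Ec i b) * b j)"
    by metis
  define u where "u b = (\<lambda>i. if i < r then real_of_int (Ec i b) else 0)" for b
  show ?thesis
  proof (intro exI[of _ u] allI ballI)
    fix x :: "(nat \<Rightarrow> real) \<Rightarrow> real" and b assume bB: "b \<in> B"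
    define w where "w = (\<lambda>i. \<Sum>b'\<in>B. x b' * b' i)"
    have wv: "w \<in> vsp r" using BN NV unfolding w_def vsp_def by (auto intro!: sum.neutral)
    have pu: "pairing r (u b') w = (\<Sum>i<r. w i * real_of_int (Ec i b'))" for b'
      unfolding pairing_def u_def by (simp add: mult_ac)
    have "w = (\<lambda>j. \<Sum>i<r. w i * unitv i j)" by (rule vsp_expand[OF wv])
    also have "\<dots> = (\<lambda>j. \<Sum>i<r. w i * (\<Sum>b'\<in>B. real_of_int (Ec i b') * b' j))"
      using Ec by (intro ext sum.cong) auto
    also have "\<dots> = (\<lambda>j. \<Sum>b'\<in>B. pairing r (u b') w * b' j)"
      unfolding pu by (intro ext) (simp add: sum_distrib_left sum_distrib_right mult_ac sum.swap[of _ B])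
    finally have eq: "w = (\<lambda>j. \<Sum>b'\<in>B. pairing r (u b') w * b' j)" .
    have "(\<lambda>j. \<Sum>b'\<in>B. (x b' - pairing r (u b') w) * b' j) = zero_vec"
      unfolding zero_vec_def
    proof
      fix j
      have "(\<Sum>b'\<in>B. (x b' - pairing r (u b') w) * b' j) = w j - (\<Sum>b'\<in>B. pairing r (u b') w * b' j)"
        unfolding w_def by (simp add: left_diff_distrib sum_subtractf)
      also have "\<dots> = 0" using fun_cong[OF eq, of j] by simp
      finally show "(\<Sum>b'\<in>B. (x b' - pairing r (u b') w) * b' j) = 0" .
    qed
    then have "x b - pairing r (u b) w = 0"
      using li[rule_format, of "\<lambda>b'. x b' - pairing r (u b') w"] bB by simp
    then show "pairing r (u b) (\<lambda>i. \<Sum>b'\<in>B. x b' * b' i) = x b" unfolding w_def by simp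
  qed
qed

lemma unit_face:
  assumes i: "i < r"
  shows "cone_face r (cone_gen {unitv i}) (pos_orthant r)"
  unfolding cone_face_def
proof (intro bexI[of _ "\<lambda>j. if j < r \<and> j \<noteq> i then 1 else 0"] conjI ballI)
  show "(\<lambda>j. if j < r \<and> j \<noteq> i then 1 else 0) \<in> vsp r" by (simp add: vsp_def)
  fix v assume "v \<in> pos_orthant r"
  then show "0 \<le> pairing r (\<lambda>j. if j < r \<and> j \<noteq> i then 1 else 0) v"
    unfolding pairing_def pos_orthant_def by (auto intro!: sum_nonneg)
next
  show "cone_gen {unitv i} = pos_orthant r \<inter> {v. pairing r (\<lambda>j. if j < r \<and> j \<noteq> i then 1 else 0) v = 0}"
  proof (intro set_eqI iffI)
    fix w assume "w \<in> cone_gen {unitv i}"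
    then obtain c0 where c0: "c0 \<ge> 0" "w = (\<lambda>j. c0 * unitv i j)" by (auto simp: cone_gen_single)
    show "w \<in> pos_orthant r \<inter> {v. pairing r (\<lambda>j. if j < r \<and> j \<noteq> i then 1 else 0) v = 0}"
      using c0 i unfolding pos_orthant_def vsp_def pairing_def unitv_def by (auto intro!: sum.neutral)
  next
    fix w assume w: "w \<in> pos_orthant r \<inter> {v. pairing r (\<lambda>j. if j < r \<and> j \<noteq> i then 1 else 0) v = 0}"
    then have wv: "w \<in> vsp r" and wp: "\<forall>j<r. 0 \<le> w j"
      and ws: "(\<Sum>j<r. (if j < r \<and> j \<noteq> i then 1 else 0) * w j) = 0"
      unfolding pos_orthant_def pairing_def by auto
    have z: "\<forall>j\<in>{..<r}. (if j < r \<and> j \<noteq> i then 1 else 0) * w j = 0"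
      using sum_nonneg_eq_0_iff[THEN iffD1, OF _ _ ws] wp by auto
    then have z2: "\<And>j. j < r \<Longrightarrow> j \<noteq> i \<Longrightarrow> w j = 0" by force
    have "w = (\<lambda>j. w i * unitv i j)"
    proof
      fix j show "w j = w i * unitv i j"
        using z2 wv unfolding unitv_def vsp_def by (cases "j < r") auto
    qed
    then show "w \<in> cone_gen {unitv i}" using wp i by (auto simp: cone_gen_single)
  qed
qed

lemma unit_prim:
  assumes i: "i < r" and A: "\<exists>j<r. j \<noteq> i \<and> a j = 1"
  shows "prim_gen (lattice_NG r l a) (cone_gen {unitv i}) (unitv i)"
  unfolding prim_gen_def
proof (intro conjI ballI)
  show "unitv i \<in> lattice_NG r l a" using unitv_NG[OF i] .
  show "unitv i \<noteq> zero_vec" unfolding unitv_def zero_vec_def by (metis zero_neq_one)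
  fix w assume "w \<in> cone_gen {unitv i} \<inter> lattice_NG r l a"
  then obtain c0 k where c0: "c0 \<ge> 0" "w = (\<lambda>j. c0 * unitv i j)"
    and k: "\<forall>j<r. w j - real_of_int k * real (a j) / real l \<in> \<int>"
    by (auto simp: cone_gen_single lattice_NG_def)
  obtain j where j: "j < r" "j \<noteq> i" "a j = 1" using A by auto
  have "0 - real_of_int k / real l \<in> \<int>" using k j c0 by (auto simp: unitv_def)
  then have kz: "real_of_int k / real l \<in> \<int>" by (metis Ints_minus diff_0 minus_minus)
  have "c0 - real_of_int k * real (a i) / real l \<in> \<int>" using k i c0 by (auto simp: unitv_def)
  moreover have "real_of_int k * real (a i) / real l \<in> \<int>"
    using kz by (metis Ints_mult Ints_of_nat times_divide_eq_left)
  ultimately have "c0 \<in> \<int>" by (metis Ints_add diff_add_cancel)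
  then obtain z where z: "c0 = real_of_int z" by (auto elim: Ints_cases)
  then have "c0 = real (nat z)" using c0 by simp
  then show "\<exists>k::nat. w = (\<lambda>j. real k * unitv i j)" using c0 by auto
qed (simp)

lemma key:
  assumes H: "has_crepant_full_resolution r l a"
    and A: "\<forall>i<r. \<exists>j<r. j \<noteq> i \<and> a j = 1"
    and vN: "v \<in> lattice_NG r l a" and vP: "v \<in> pos_orthant r"
  shows "\<exists>S c. finite S \<and> (\<forall>s\<in>S. s \<in> lattice_NG r l a \<and> s \<in> pos_orthant r \<and> (\<Sum>i<r. s i) = 1)
           \<and> v = (\<lambda>i. \<Sum>s\<in>S. real (c s) * s i)"
proof -
  define N where "N = lattice_NG r l a"
  define DG where "DG = face_fan r (pos_orthant r)"
  obtain D where fan: "is_fan r N D" and ref: "refines D DG" and sm: "smooth_fan N D"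
    and cr: "crepant r N DG D"
    using H unfolding has_crepant_full_resolution_def Let_def N_def DG_def by blast
  obtain m where mv: "m \<in> vsp r"
    and mG: "\<forall>\<rho>\<in>DG. \<forall>u. is_ray \<rho> \<and> prim_gen N \<rho> u \<longrightarrow> pairing r m u = 1"
    and mD: "\<forall>\<rho>\<in>D. \<forall>u. is_ray \<rho> \<and> prim_gen N \<rho> u \<longrightarrow> pairing r m u - 1 = 0"
    using cr unfolding crepant_def by blast
  have NV: "N \<subseteq> vsp r" unfolding N_def by (rule NG_vsp)
  have EN: "\<forall>i<r. unitv i \<in> N" unfolding N_def using unitv_NG by blast
  have m1: "m i = 1" if i: "i < r" for i
  proof -
    have "cone_gen {unitv i} \<in> DG" unfolding DG_def face_fan_def using unit_face[OF i] by simp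
    moreover have "is_ray (cone_gen {unitv i})" unfolding is_ray_def
      by (intro exI[of _ "unitv i"]) (simp add: unitv_def zero_vec_def fun_eq_iff)
    moreover have "prim_gen N (cone_gen {unitv i}) (unitv i)"
      unfolding N_def using unit_prim[OF i] A i by blast
    ultimately have "pairing r m (unitv i) = 1" using mG by blast
    moreover have "pairing r m (unitv i) = m i"
      unfolding pairing_def unitv_def using i by (simp add: if_distrib cong: if_cong)
    ultimately show ?thesis by simp
  qed
  have pm: "pairing r m w = (\<Sum>i<r. w i)" for w
    unfolding pairing_def using m1 by simp
  have POG: "pos_orthant r \<in> DG"
    unfolding DG_def face_fan_def cone_face_def
    by (intro CollectI bexI[of _ zero_vec]) (auto simp: pairing_def zero_vec_def vsp_def)
  have UDG: "\<Union>DG \<subseteq> pos_orthant r"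
    unfolding DG_def face_fan_def cone_face_def by auto
  have UD: "\<Union>D = \<Union>DG" using ref unfolding refines_def by blast
  obtain \<sigma> where sD: "\<sigma> \<in> D" and vs: "v \<in> \<sigma>" using POG vP UD by blast
  obtain B S where LB: "lattice_basis N B" and SB: "S \<subseteq> B" and sg: "\<sigma> = cone_gen S"
    using sm sD unfolding smooth_fan_def by blast
  have finB: "finite B" and BN: "B \<subseteq> N"
   and sp: "\<forall>v\<in>N. \<exists>c::(nat \<Rightarrow> real) \<Rightarrow> int. v = (\<lambda>i. \<Sum>b\<in>B. real_of_int (c b) * b i)"
    using LB unfolding lattice_basis_def by auto
  have finS: "finite S" using finB SB finite_subset by blast
  obtain u where u: "\<And>x b. b \<in> B \<Longrightarrow> pairing r (u b) (\<lambda>i. \<Sum>b'\<in>B. x b' * b' i) = x b"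
    using dual_exists[OF LB NV EN] by blast
  have uS: "pairing r (u b) (\<lambda>i. \<Sum>s\<in>S. x s * s i) = x b" if bS: "b \<in> S" for x b
  proof -
    have "(\<lambda>i. \<Sum>b'\<in>B. (if b' \<in> S then x b' else 0) * b' i) = (\<lambda>i. \<Sum>s\<in>S. x s * s i)"
    proof
      fix i
      have "(\<Sum>b'\<in>B. (if b' \<in> S then x b' else 0) * b' i) = (\<Sum>b'\<in>B. (if b' \<in> S then x b' * b' i else 0))"
        by (intro sum.cong) auto
      also have "\<dots> = (\<Sum>b'\<in>B \<inter> S. x b' * b' i)" using finB by (simp add: sum.inter_restrict)
      also have "B \<inter> S = S" using SB by blast
      finally show "(\<Sum>b'\<in>B. (if b' \<in> S then x b' else 0) * b' i) = (\<Sum>s\<in>S. x s * s i)" .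
    qed
    then show ?thesis using u[of b "\<lambda>b'. if b' \<in> S then x b' else 0"] bS SB by auto
  qed
  have uNint: "pairing r (u b) w \<in> \<int>" if "b \<in> B" "w \<in> N" for b w
  proof -
    obtain d where "w = (\<lambda>i. \<Sum>b\<in>B. real_of_int (d b) * b i)" using sp \<open>w \<in> N\<close> by blast
    then show ?thesis using u[of b "\<lambda>b. real_of_int (d b)"] \<open>b \<in> B\<close> by simp
  qed
  have sing: "(\<lambda>i. \<Sum>s'\<in>S. (if s' = s then 1 else 0) * s' i) = s" if "s \<in> S" for s
  proof
    fix i
    have "(\<Sum>s'\<in>S. (if s' = s then 1 else 0) * s' i) = (\<Sum>s'\<in>S. if s' = s then s i else 0)"
      by (intro sum.cong) auto
    then show "(\<Sum>s'\<in>S. (if s' = s then 1 else 0) * s' i) = s i" using that finS by simp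
  qed
  have uss: "pairing r (u s) s = 1" if "s \<in> S" for s
    using uS[of s "\<lambda>s'. if s' = s then 1 else 0"] sing[OF that] that by simp
  obtain c where c0: "\<forall>s\<in>S. 0 \<le> c s" and vc: "v = (\<lambda>i. \<Sum>s\<in>S. c s * s i)"
    using vs sg unfolding cone_gen_def by blast
  have cint: "c s \<in> \<int>" if "s \<in> S" for s
    using uNint[of s v] uS[of s c] vc that SB vN N_def by auto
  have sprop: "s \<in> lattice_NG r l a \<and> s \<in> pos_orthant r \<and> (\<Sum>i<r. s i) = 1" if sS: "s \<in> S" for s
  proof (intro conjI)
    show sN: "s \<in> lattice_NG r l a" using sS SB BN N_def by blast
    have "s \<in> \<sigma>" unfolding sg cone_gen_def
      by (intro CollectI exI[of _ "\<lambda>s'. if s' = s then 1 else 0"]) (simp add: sing[OF sS])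
    then show "s \<in> pos_orthant r" using sD UD UDG by blast
    define U where "U = (\<lambda>i. if i < r then \<Sum>b\<in>S - {s}. u b i else 0)"
    have pU: "pairing r U w = (\<Sum>b\<in>S - {s}. pairing r (u b) w)" for w
    proof -
      have "pairing r U w = (\<Sum>i<r. (\<Sum>b\<in>S - {s}. u b i) * w i)"
        unfolding U_def pairing_def by (intro sum.cong) auto
      then show ?thesis unfolding pairing_def by (simp add: sum_distrib_right sum.swap[of _ "S - {s}"])
    qed
    have pUx: "pairing r U (\<lambda>i. \<Sum>s\<in>S. x s * s i) = (\<Sum>b\<in>S - {s}. x b)" for x
      unfolding pU using uS by (intro sum.cong) auto
    have face: "cone_face r (cone_gen {s}) \<sigma>"
      unfolding cone_face_def
    proof (intro bexI[of _ U] conjI ballI)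
      show "U \<in> vsp r" unfolding U_def vsp_def by auto
      fix w assume "w \<in> \<sigma>"
      then obtain x where x0: "\<forall>s\<in>S. 0 \<le> x s" and wx: "w = (\<lambda>i. \<Sum>s\<in>S. x s * s i)"
        using sg unfolding cone_gen_def by blast
      show "0 \<le> pairing r U w" unfolding wx pUx using x0 by (auto intro!: sum_nonneg)
    next
      show "cone_gen {s} = \<sigma> \<inter> {w. pairing r U w = 0}"
      proof (intro set_eqI iffI)
        fix w assume "w \<in> cone_gen {s}"
        then obtain c1 where c1: "c1 \<ge> 0" "w = (\<lambda>i. c1 * s i)" by (auto simp: cone_gen_single)
        define x where "x = (\<lambda>s'. if s' = s then c1 else 0)"
        have wx: "w = (\<lambda>i. \<Sum>s\<in>S. x s * s i)"
          unfolding x_def c1(2) using sum_single_coef[OF finS sS] by simp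
        have "w \<in> \<sigma>" unfolding sg cone_gen_def using wx c1 x_def by (intro CollectI exI[of _ x]) auto
        moreover have "pairing r U w = 0" unfolding wx pUx x_def by simp
        ultimately show "w \<in> \<sigma> \<inter> {w. pairing r U w = 0}" by blast
      next
        fix w assume w: "w \<in> \<sigma> \<inter> {w. pairing r U w = 0}"
        then obtain x where x0: "\<forall>s\<in>S. 0 \<le> x s" and wx: "w = (\<lambda>i. \<Sum>s\<in>S. x s * s i)"
          using sg unfolding cone_gen_def by blast
        have "(\<Sum>b\<in>S - {s}. x b) = 0" using w pUx[of x] wx by simp
        then have xz: "\<forall>b\<in>S - {s}. x b = 0"
          using sum_nonneg_eq_0_iff[of "S - {s}" x] finS x0 by auto
        have "w = (\<lambda>i. x s * s i)"
        proof
          fix i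
          have "(\<Sum>s'\<in>S. x s' * s' i) = x s * s i + (\<Sum>s'\<in>S - {s}. x s' * s' i)"
            using sS finS by (simp add: sum.remove)
          also have "(\<Sum>s'\<in>S - {s}. x s' * s' i) = 0" using xz by simp
          finally show "w i = x s * s i" unfolding wx by simp
        qed
        then show "w \<in> cone_gen {s}" using x0 sS by (auto simp: cone_gen_single)
      qed
    qed
    then have sD': "cone_gen {s} \<in> D" using fan sD unfolding is_fan_def by blast
    have snz: "s \<noteq> zero_vec"
    proof
      assume "s = zero_vec"
      then have "pairing r (u s) s = 0" by (simp add: pairing_def zero_vec_def)
      then show False using uss[OF sS] by simp
    qed
    have ray: "is_ray (cone_gen {s})" unfolding is_ray_def using snz by blast
    have prim: "prim_gen N (cone_gen {s}) s"
      unfolding prim_gen_def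
    proof (intro conjI ballI)
      show "s \<in> N" using sN N_def by simp
      show "s \<noteq> zero_vec" by (rule snz)
      fix w assume w: "w \<in> cone_gen {s} \<inter> N"
      then obtain c1 where c1: "c1 \<ge> 0" "w = (\<lambda>i. c1 * s i)" by (auto simp: cone_gen_single)
      have "pairing r (u s) w = c1" unfolding c1(2) pairing_lin uss[OF sS] by simp
      then have "c1 \<in> \<int>" using uNint[of s w] w sS SB by auto
      then obtain z where "c1 = real_of_int z" by (auto elim: Ints_cases)
      then have "c1 = real (nat z)" using c1 by simp
      then show "\<exists>k::nat. w = (\<lambda>i. real k * s i)" using c1 by auto
    qed simp
    have "pairing r m s - 1 = 0" using mD sD' ray prim by blast
    then show "(\<Sum>i<r. s i) = 1" using pm by simp
  qed
  define cn where "cn s = nat \<lfloor>c s\<rfloor>" for s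
  have "real (cn s) = c s" if "s \<in> S" for s
    using cint[OF that] c0 that unfolding cn_def by (auto elim!: Ints_cases)
  then have "v = (\<lambda>i. \<Sum>s\<in>S. real (cn s) * s i)" unfolding vc by (auto intro!: sum.cong)
  then show ?thesis using finS sprop by blast
qed

lemma ints_small: "(x::real) \<in> \<int> \<Longrightarrow> \<bar>x\<bar> < 1 \<Longrightarrow> x = 0"
  by (auto elim!: Ints_cases)

lemma ints_div_iff:
  assumes "l > 0"
  shows "(real_of_int k * real a / real l \<in> \<int>) \<longleftrightarrow> (int l dvd k * int a)"
proof
  assume "real_of_int k * real a / real l \<in> \<int>"
  then obtain z where z: "real_of_int k * real a / real l = real_of_int z" by (auto elim!: Ints_cases)
  then have "real_of_int k * real a = real_of_int z * real l" using assms by (simp add: field_simps)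
  then have "real_of_int (k * int a) = real_of_int (z * int l)" by simp
  then have "k * int a = z * int l" by (simp only: of_int_eq_iff)
  then show "int l dvd k * int a" by simp
next
  assume "int l dvd k * int a"
  then obtain z where "k * int a = int l * z" by (auto elim!: dvdE)
  then have "real_of_int (k * int a) = real_of_int (int l * z)" by simp
  then have "real_of_int k * real a = real l * real_of_int z" by simp
  then have "real_of_int k * real a / real l = real_of_int z" using assms by (simp add: field_simps)
  then show "real_of_int k * real a / real l \<in> \<int>" by simp
qed

lemma dvd_gcd3:
  assumes "int l dvd k * int a" "int l dvd k * int b"
  shows "int l dvd k * int (gcd (gcd a b) l)"
proof -
  have "int l dvd k * int l" by simp
  then have "int l dvd gcd (gcd (k * int a) (k * int b)) (k * int l)" using assms by simp
  moreover have "gcd (gcd (k * int a) (k * int b)) (k * int l) = \<bar>k\<bar> * int (gcd (gcd a b) l)"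
    by (metis (no_types, opaque_lifting) abs_mult gcd.commute gcd_abs2_int
    gcd_int_int_eq gcd_mult_distrib_int)
  ultimately have "int l dvd \<bar>k\<bar> * int (gcd (gcd a b) l)" by simp
  then show ?thesis by (metis abs_mult abs_of_nat dvd_abs_iff)
qed

lemma dvd_gcd2:
  assumes "int l dvd k * int a"
  shows "int l dvd k * int (gcd a l)"
  using dvd_gcd3[OF assms assms] by simp

lemma le_of_coef:
  assumes "finite S" "s \<in> S" "c s \<noteq> 0" "\<forall>s'\<in>S. 0 \<le> (s' i :: real)"
  shows "s i \<le> (\<Sum>s'\<in>S. real (c s') * s' i)"
proof -
  have "1 \<le> real (c s)" using assms by simp
  then have "s i \<le> real (c s) * s i" using assms mult_right_mono[of 1 "real (c s)" "s i"] by simp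
  also have "\<dots> \<le> (\<Sum>s'\<in>S. real (c s') * s' i)"
    using assms by (intro member_le_sum) auto
  finally show ?thesis .
qed

lemma tw_facts:
  assumes "r \<ge> 4"
  shows "\<And>i. i < r - 2 \<Longrightarrow> type_weights r \<alpha> \<beta> i = 1"
    and "type_weights r \<alpha> \<beta> (r - 2) = \<alpha>"
    and "type_weights r \<alpha> \<beta> (Suc (r - 2)) = \<beta>"
    and "\<forall>i<r. \<exists>j<r. j \<noteq> i \<and> type_weights r \<alpha> \<beta> j = 1"
proof -
  show "\<And>i. i < r - 2 \<Longrightarrow> type_weights r \<alpha> \<beta> i = 1" by (simp add: type_weights_def)
  show "type_weights r \<alpha> \<beta> (r - 2) = \<alpha>" by (simp add: type_weights_def)
  have "Suc (r - 2) = r - 1" using assms by simp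
  then show "type_weights r \<alpha> \<beta> (Suc (r - 2)) = \<beta>" using assms by (simp add: type_weights_def)
  show "\<forall>i<r. \<exists>j<r. j \<noteq> i \<and> type_weights r \<alpha> \<beta> j = 1"
  proof (intro allI impI)
    fix i assume "i < r"
    show "\<exists>j<r. j \<noteq> i \<and> type_weights r \<alpha> \<beta> j = 1"
    proof (cases "i = 0")
      case True then show ?thesis using assms by (intro exI[of _ 1]) (simp add: type_weights_def)
    next
      case False then show ?thesis using assms by (intro exI[of _ 0]) (simp add: type_weights_def)
    qed
  qed
qed

lemma part1:
  fixes r l \<alpha> \<beta> :: nat
  assumes r4: "r \<ge> 4" and lr: "l \<ge> r" and ab: "\<alpha> + \<beta> = l - (r - 2)"
    and H: "has_crepant_full_resolution r l (type_weights r \<alpha> \<beta>)"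
  shows "gcd (gcd \<alpha> \<beta>) l \<in> {1, r - 2}"
proof -
  define n where "n = r - 2"
  have rn: "r = Suc (Suc n)" and n2: "n \<ge> 2" using r4 unfolding n_def by auto
  define a where "a = type_weights r \<alpha> \<beta>"
  have a1: "\<And>i. i < n \<Longrightarrow> a i = 1" and an: "a n = \<alpha>" and an1: "a (Suc n) = \<beta>"
    and A: "\<forall>i<r. \<exists>j<r. j \<noteq> i \<and> a j = 1"
    using tw_facts[OF r4] unfolding a_def n_def by auto
  have H': "has_crepant_full_resolution r l a" using H a_def by simp
  have l0: "l > 0" using lr r4 by simp
  define g where "g = gcd (gcd \<alpha> \<beta>) l"
  have gpos: "g > 0" unfolding g_def using l0 by simp
  show ?thesis
  proof (cases "g = 1")
    case True then show ?thesis unfolding g_def by simp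
  next
    case False
    then have g2: "g \<ge> 2" using gpos by simp
    have ga: "g dvd \<alpha>" and gb: "g dvd \<beta>" and gl: "g dvd l" unfolding g_def
      by (meson dvd_trans gcd_dvd1 gcd_dvd2)+
    have nab: "n = l - (\<alpha> + \<beta>)" using ab lr r4 unfolding n_def by simp
    have gn: "g dvd n" unfolding nab using ga gb gl by (simp add: dvd_diff_nat)
    define v where "v = (\<lambda>i. if i < n then 1 / real g else 0)"
    have kd: "real (l div g) * real (a i) / real l = real (a i) / real g" for i
      using gl l0 gpos by (simp add: real_of_nat_div field_simps)
    have ag: "real (a i) / real g \<in> \<int>" if "i \<ge> n" "i < r" for i
    proof -
      have "i = n \<or> i = Suc n" using that rn by auto
      then have "g dvd a i" using an an1 ga gb by auto
      then have "real (a i) / real g = real (a i div g)" by (simp add: real_of_nat_div)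
      then show ?thesis by simp
    qed
    have vN: "v \<in> lattice_NG r l a"
      unfolding lattice_NG_def vsp_def
    proof (intro CollectI conjI allI impI exI[of _ "int (l div g)"])
      fix i assume "r \<le> i" then show "v i = 0" unfolding v_def using rn by simp
    next
      fix i assume ir: "i < r"
      have "v i - real_of_int (int (l div g)) * real (a i) / real l = v i - real (a i) / real g"
        using kd by simp
      also have "\<dots> \<in> \<int>"
      proof (cases "i < n")
        case True then show ?thesis unfolding v_def using a1 by simp
      next
        case False then show ?thesis unfolding v_def using ag[of i] ir by (simp add: Ints_minus)
      qed
      finally show "v i - real_of_int (int (l div g)) * real (a i) / real l \<in> \<int>" .
    qed
    have vP: "v \<in> pos_orthant r" unfolding pos_orthant_def vsp_def v_def using rn by auto
    obtain S c where finS: "finite S"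
      and Sp: "\<forall>s\<in>S. s \<in> lattice_NG r l a \<and> s \<in> pos_orthant r \<and> (\<Sum>i<r. s i) = 1"
      and vc: "v = (\<lambda>i. \<Sum>s\<in>S. real (c s) * s i)"
      using key[OF H' A vN vP] by blast
    have "\<exists>s\<in>S. c s \<noteq> 0"
    proof (rule ccontr)
      assume "\<not> (\<exists>s\<in>S. c s \<noteq> 0)"
      then have "v 0 = 0" unfolding vc by simp
      then show False unfolding v_def using n2 gpos by simp
    qed
    then obtain s where sS: "s \<in> S" and cs: "c s \<noteq> 0" by blast
    have sN: "s \<in> lattice_NG r l a" and sP: "s \<in> pos_orthant r" and ssum: "(\<Sum>i<r. s i) = 1"
      using Sp sS by auto
    have ge: "\<And>i. i < r \<Longrightarrow> 0 \<le> s i" using sP unfolding pos_orthant_def by auto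
    have le: "s i \<le> v i" if "i < r" for i
    proof -
      have "\<forall>s'\<in>S. 0 \<le> s' i" using Sp that unfolding pos_orthant_def by auto
      then show ?thesis using le_of_coef[of S s c i, OF finS sS cs] vc by simp
    qed
    have sn: "s n = 0" using le[of n] ge[of n] rn unfolding v_def by simp
    have sn1: "s (Suc n) = 0" using le[of "Suc n"] ge[of "Suc n"] rn unfolding v_def by simp
    obtain k' where k': "\<forall>i<r. s i - real_of_int k' * real (a i) / real l \<in> \<int>"
      using sN unfolding lattice_NG_def by blast
    have "0 < r" using rn by simp
    then have "s 0 - real_of_int k' * real (a 0) / real l \<in> \<int>" using k' by blast
    then have s0: "s 0 - real_of_int k' / real l \<in> \<int>" using a1[of 0] n2 by simp
    have eq: "s i = s 0" if "i < n" for i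
    proof -
      have "i < r" using that rn by simp
      then have "s i - real_of_int k' / real l \<in> \<int>" using k' a1[OF that] by auto
      moreover have "s i - s 0 = (s i - real_of_int k' / real l) - (s 0 - real_of_int k' / real l)" by simp
      ultimately have "s i - s 0 \<in> \<int>" using Ints_diff[OF _ s0, of "s i - real_of_int k' / real l"] by simp
      moreover have "\<bar>s i - s 0\<bar> < 1"
      proof -
        have "s i \<le> 1 / real g" "s 0 \<le> 1 / real g" using le[of i] le[of 0] that n2 rn unfolding v_def by auto
        moreover have "1 / real g \<le> 1 / 2" using g2 by (simp add: field_simps)
        ultimately show ?thesis using ge[of i] ge[of 0] that rn by auto
      qed
      ultimately show ?thesis using ints_small[of "s i - s 0"] by simp
    qed
    have "(\<Sum>i<r. s i) = (\<Sum>i<n. s i) + s n + s (Suc n)" unfolding rn by simp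
    also have "(\<Sum>i<n. s i) = (\<Sum>i<n. s 0)" by (rule sum.cong) (auto dest: eq)
    also have "\<dots> = real n * s 0" by simp
    finally have ns: "real n * s 0 = 1" using ssum sn sn1 by simp
    have "n < r" "Suc n < r" using rn by auto
    then have "s n - real_of_int k' * real (a n) / real l \<in> \<int>" using k' by blast
    then have "- (s n - real_of_int k' * real (a n) / real l) \<in> \<int>" by (rule Ints_minus)
    then have "real_of_int k' * real \<alpha> / real l \<in> \<int>" using sn an by simp
    then have d1: "int l dvd k' * int \<alpha>" using ints_div_iff[OF l0] by blast
    have "s (Suc n) - real_of_int k' * real (a (Suc n)) / real l \<in> \<int>" using k' \<open>Suc n < r\<close> by blast
    then have "- (s (Suc n) - real_of_int k' * real (a (Suc n)) / real l) \<in> \<int>" by (rule Ints_minus)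
    then have "real_of_int k' * real \<beta> / real l \<in> \<int>" using sn1 an1 by simp
    then have d2: "int l dvd k' * int \<beta>" using ints_div_iff[OF l0] by blast
    have "int l dvd k' * int g" unfolding g_def by (rule dvd_gcd3[OF d1 d2])
    then have kg: "real_of_int k' * real g / real l \<in> \<int>" using ints_div_iff[OF l0] by blast
    have "real g * (s 0 - real_of_int k' / real l) \<in> \<int>" using s0 by (simp add: Ints_mult)
    then have "real g * s 0 - real_of_int k' * real g / real l \<in> \<int>" by (simp add: algebra_simps)
    from Ints_add[OF this kg] have "real g * s 0 \<in> \<int>" by simp
    moreover have "real g * s 0 = real g / real n" using ns n2 by (simp add: field_simps)
    ultimately obtain z where z: "real g / real n = real_of_int z" by (auto elim!: Ints_cases)
    then have "real g = real_of_int z * real n" using n2 by (simp add: field_simps)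
    then have "real_of_int (int g) = real_of_int (z * int n)" by simp
    then have "int g = z * int n" by (simp only: of_int_eq_iff)
    then have "int n dvd int g" by simp
    then have "n dvd g" by simp
    then have "g = n" using gn by (simp add: dvd_antisym)
    then show ?thesis unfolding g_def n_def by simp
  qed
qed

lemma part3:
  fixes r l n p q \<gamma> \<delta> :: nat and a :: "nat \<Rightarrow> nat"
  assumes H: "has_crepant_full_resolution r l a"
    and A: "\<forall>i<r. \<exists>j<r. j \<noteq> i \<and> a j = 1"
    and rn: "r = Suc (Suc n)" and n2: "n \<ge> 2"
    and pq: "(p = n \<and> q = Suc n) \<or> (p = Suc n \<and> q = n)"
    and a1: "\<And>i. i < n \<Longrightarrow> a i = 1" and ap: "a p = \<gamma>" and aq: "a q = \<delta>"
    and sm: "\<gamma> + \<delta> + n = l" and l0: "l > 0"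
  shows "gcd \<gamma> l mod n \<le> 1"
proof -
  define t where "t = gcd \<gamma> l"
  have tpos: "t > 0" unfolding t_def using l0 by simp
  have t1: "real t \<ge> 1" using tpos by simp
  have tg: "t dvd \<gamma>" and tl: "t dvd l" unfolding t_def by auto
  have tdn: "t dvd \<delta> + n"
  proof -
    have "\<delta> + n = l - \<gamma>" using sm by simp
    then show ?thesis using tg tl by (simp add: dvd_diff_nat)
  qed
  have pr: "p < r" "q < r" "p \<noteq> q" "\<not> p < n" "\<not> q < n" using pq rn by auto
  define v where "v = (\<lambda>i. if i < n then (real t - 1) / real t else if i = q then real n / real t else 0)"
  define k where "k = int ((t - 1) * (l div t))"
  have rk: "real_of_int k = (real t - 1) * (real l / real t)"
    unfolding k_def using tpos tl by (simp add: real_of_nat_div of_nat_diff)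
  have kd: "real_of_int k * real x / real l = (real t - 1) * real x / real t" for x
    unfolding rk using l0 tpos by (simp add: field_simps)
  have vN: "v \<in> lattice_NG r l a"
    unfolding lattice_NG_def vsp_def
  proof (intro CollectI conjI allI impI exI[of _ k])
    fix i assume "r \<le> i" then show "v i = 0" unfolding v_def using rn pr by auto
  next
    fix i assume ir: "i < r"
    have "i < n \<or> i = p \<or> i = q" using ir rn pq by auto
    moreover {
      assume "i < n"
      then have "v i - real_of_int k * real (a i) / real l = 0" unfolding v_def kd using a1 by simp
      then have "v i - real_of_int k * real (a i) / real l \<in> \<int>" by simp }
    moreover {
      assume ip: "i = p"
      have "real \<gamma> / real t = real (\<gamma> div t)" using tg by (simp add: real_of_nat_div)
      moreover have "(real t - 1) * real \<gamma> / real t = (real t - 1) * (real \<gamma> / real t)" by simp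
      ultimately have "v i - real_of_int k * real (a i) / real l = - ((real t - 1) * real (\<gamma> div t))"
        unfolding v_def kd using ip pr ap by simp
      moreover have "- ((real t - 1) * real (\<gamma> div t)) \<in> \<int>"
        using tpos by (simp add: of_nat_diff[symmetric])
      ultimately have "v i - real_of_int k * real (a i) / real l \<in> \<int>" by simp }
    moreover {
      assume iq: "i = q"
      have dv: "(real \<delta> + real n) / real t = real ((\<delta> + n) div t)" using tdn by (simp add: real_of_nat_div)
      have "v i - real_of_int k * real (a i) / real l = real n / real t - (real t - 1) * real \<delta> / real t"
        unfolding v_def kd using iq pr aq by simp
      also have "\<dots> = (real \<delta> + real n) / real t - real \<delta>" using tpos by (simp add: field_simps)
      also have "\<dots> = real ((\<delta> + n) div t) - real \<delta>" using dv by simp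
      finally have "v i - real_of_int k * real (a i) / real l \<in> \<int>" by simp }
    ultimately show "v i - real_of_int k * real (a i) / real l \<in> \<int>" by blast
  qed
  have vP: "v \<in> pos_orthant r" unfolding pos_orthant_def vsp_def v_def using rn pr t1 by auto
  obtain S c where finS: "finite S"
    and Sp: "\<forall>s\<in>S. s \<in> lattice_NG r l a \<and> s \<in> pos_orthant r \<and> (\<Sum>i<r. s i) = 1"
    and vc: "v = (\<lambda>i. \<Sum>s\<in>S. real (c s) * s i)"
    using key[OF H A vN vP] by blast
  have sumv: "(\<Sum>i<r. v i) = real n"
  proof -
    have "(\<Sum>i<r. v i) = (\<Sum>i<n. v i) + v n + v (Suc n)" unfolding rn by simp
    also have "(\<Sum>i<n. v i) = real n * ((real t - 1) / real t)" unfolding v_def by simp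
    finally have e: "(\<Sum>i<r. v i) = real n * ((real t - 1) / real t) + (v n + v (Suc n))" by simp
    have "v n + v (Suc n) = real n / real t" unfolding v_def using pq by auto
    then show ?thesis unfolding e using tpos by (simp add: field_simps)
  qed
  have "(\<Sum>i<r. v i) = (\<Sum>s\<in>S. real (c s) * (\<Sum>i<r. s i))"
    unfolding vc by (simp add: sum_distrib_left sum.swap[of _ S])
  also have "\<dots> = (\<Sum>s\<in>S. real (c s))" using Sp by (intro sum.cong) auto
  finally have sumc: "(\<Sum>s\<in>S. real (c s)) = real n" using sumv by simp
  have bound: "real (c s) * (real t * s 0) \<le> real (c s) * real (t div n)" if sS: "s \<in> S" for s
  proof (cases "c s = 0")
    case True then show ?thesis by simp
  next
    case cs: False
    have sN: "s \<in> lattice_NG r l a" and sP: "s \<in> pos_orthant r" and ssum: "(\<Sum>i<r. s i) = 1"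
      using Sp sS by auto
    have ge: "\<And>i. i < r \<Longrightarrow> 0 \<le> s i" using sP unfolding pos_orthant_def by auto
    have le: "s i \<le> v i" if "i < r" for i
    proof -
      have "\<forall>s'\<in>S. 0 \<le> s' i" using Sp that unfolding pos_orthant_def by auto
      then show ?thesis using le_of_coef[of S s c i, OF finS sS cs] vc by simp
    qed
    have sp: "s p = 0" using le[of p] ge[of p] pr unfolding v_def by simp
    obtain k' where k': "\<forall>i<r. s i - real_of_int k' * real (a i) / real l \<in> \<int>"
      using sN unfolding lattice_NG_def by blast
    have "0 < r" using rn by simp
    then have "s 0 - real_of_int k' * real (a 0) / real l \<in> \<int>" using k' by blast
    then have s0: "s 0 - real_of_int k' / real l \<in> \<int>" using a1[of 0] n2 by simp
    have "s p - real_of_int k' * real (a p) / real l \<in> \<int>" using k' pr by blast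
    then have "- (s p - real_of_int k' * real (a p) / real l) \<in> \<int>" by (rule Ints_minus)
    then have "real_of_int k' * real \<gamma> / real l \<in> \<int>" using sp ap by simp
    then have "int l dvd k' * int \<gamma>" using ints_div_iff[OF l0] by blast
    then have "int l dvd k' * int t" unfolding t_def by (rule dvd_gcd2)
    then have kt: "real_of_int k' * real t / real l \<in> \<int>" using ints_div_iff[OF l0] by blast
    have "real t * (s 0 - real_of_int k' / real l) \<in> \<int>" using s0 by (simp add: Ints_mult)
    then have "real t * s 0 - real_of_int k' * real t / real l \<in> \<int>" by (simp add: algebra_simps)
    from Ints_add[OF this kt] have ts0: "real t * s 0 \<in> \<int>" by simp
    have eq: "s i = s 0" if "i < n" for i
    proof -
      have "i < r" using that rn by simp
      then have "s i - real_of_int k' / real l \<in> \<int>" using k' a1[OF that] by auto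
      moreover have "s i - s 0 = (s i - real_of_int k' / real l) - (s 0 - real_of_int k' / real l)" by simp
      ultimately have "s i - s 0 \<in> \<int>" using Ints_diff[OF _ s0, of "s i - real_of_int k' / real l"] by simp
      moreover have "\<bar>s i - s 0\<bar> < 1"
      proof -
        have "s i \<le> (real t - 1) / real t" "s 0 \<le> (real t - 1) / real t"
          using le[of i] le[of 0] that n2 rn unfolding v_def by auto
        moreover have "(real t - 1) / real t < 1" using tpos by (simp add: field_simps)
        ultimately show ?thesis using ge[of i] ge[of 0] that rn by auto
      qed
      ultimately show ?thesis using ints_small[of "s i - s 0"] by simp
    qed
    have "(\<Sum>i<r. s i) = (\<Sum>i<n. s i) + s n + s (Suc n)" unfolding rn by simp
    also have "(\<Sum>i<n. s i) = (\<Sum>i<n. s 0)" by (rule sum.cong) (auto dest: eq)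
    also have "\<dots> = real n * s 0" by simp
    finally have e: "(\<Sum>i<r. s i) = real n * s 0 + (s n + s (Suc n))" by simp
    have "s n + s (Suc n) = s q" using sp pq by auto
    then have "real n * s 0 + s q = 1" using ssum e by simp
    then have ns: "real n * s 0 \<le> 1" using ge[of q] pr by simp
    obtain z where z: "real t * s 0 = real_of_int z" using ts0 by (auto elim!: Ints_cases)
    have "0 \<le> s 0" using ge[of 0] rn by simp
    then have "0 \<le> real t * s 0" by simp
    then have "z \<ge> 0" using z by simp
    then obtain J where J: "real t * s 0 = real J" using z by (metis of_int_of_nat_eq nonneg_int_cases)
    have "real n * real J = real t * (real n * s 0)" using J by (simp add: algebra_simps)
    also have "\<dots> \<le> real t" using ns t1 by (simp add: mult_left_le)
    finally have "n * J \<le> t" by (metis of_nat_le_iff of_nat_mult)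
    then have "J \<le> t div n" using n2 by (simp add: less_eq_div_iff_mult_less_eq mult.commute)
    then have "real t * s 0 \<le> real (t div n)" using J by simp
    then show ?thesis by (simp add: mult_left_mono)
  qed
  have "v 0 = (real t - 1) / real t" unfolding v_def using n2 by simp
  then have "(real t - 1) / real t = (\<Sum>s\<in>S. real (c s) * s 0)" unfolding vc by simp
  then have "real t - 1 = (\<Sum>s\<in>S. real (c s) * (real t * s 0))"
    using tpos by (simp add: field_simps sum_distrib_left sum_divide_distrib)
  also have "\<dots> \<le> (\<Sum>s\<in>S. real (c s) * real (t div n))" using bound by (intro sum_mono) auto
  also have "\<dots> = real n * real (t div n)" using sumc by (simp add: sum_distrib_right[symmetric])
  finally have "real t \<le> real (n * (t div n) + 1)" by simp
  then have "t \<le> n * (t div n) + 1" by (simp only: of_nat_le_iff)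
  moreover have "t = n * (t div n) + t mod n" by simp
  ultimately show ?thesis unfolding t_def by linarith
qed

theorem lemma6p20:
  fixes r l \<alpha> \<beta> :: nat
  assumes "r \<ge> 4" and "l \<ge> r" and "\<alpha> \<ge> 1" and "\<beta> \<ge> 1"
    and "\<alpha> + \<beta> = l - (r - 2)"
    and "has_crepant_full_resolution r l (type_weights r \<alpha> \<beta>)"
  shows "gcd (gcd \<alpha> \<beta>) l \<in> {1, r - 2} \<and>
         gcd \<beta> l = gcd (\<alpha> + (r - 2)) l \<and>
         (gcd (gcd \<alpha> \<beta>) l = 1 \<longrightarrow>
            gcd \<alpha> l mod (r - 2) = 1 \<and> gcd \<beta> l mod (r - 2) = 1)"
proof (intro conjI impI)
  note r4 = assms(1) and lr = assms(2) and ab = assms(5) and H = assms(6)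
  show "gcd (gcd \<alpha> \<beta>) l \<in> {1, r - 2}" by (rule part1[OF r4 lr ab H])
  define n where "n = r - 2"
  have rn: "r = Suc (Suc n)" and n2: "n \<ge> 2" using r4 unfolding n_def by auto
  have sm: "\<alpha> + \<beta> + n = l" using ab lr r4 unfolding n_def by simp
  have l0: "l > 0" using lr r4 by simp
  have "\<alpha> + n = l - \<beta>" using sm by simp
  moreover have "gcd (l - \<beta>) l = gcd \<beta> l"
  proof -
    have "\<beta> \<le> l" using sm by simp
    then show ?thesis by (metis gcd.commute gcd_diff1_nat diff_diff_cancel diff_le_self)
  qed
  ultimately show "gcd \<beta> l = gcd (\<alpha> + (r - 2)) l" unfolding n_def by simp
  define a where "a = type_weights r \<alpha> \<beta>"
  have a1: "\<And>i. i < n \<Longrightarrow> a i = 1" and an: "a n = \<alpha>" and an1: "a (Suc n) = \<beta>"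
    and A: "\<forall>i<r. \<exists>j<r. j \<noteq> i \<and> a j = 1"
    using tw_facts[OF r4] unfolding a_def n_def by auto
  have H': "has_crepant_full_resolution r l a" using H a_def by simp
  assume g1: "gcd (gcd \<alpha> \<beta>) l = 1"
  have nd: "\<not> n dvd gcd x l" if "x = \<alpha> \<or> x = \<beta>" for x
  proof
    assume "n dvd gcd x l"
    then have nx: "n dvd x" and nl: "n dvd l" by (meson dvd_trans gcd_dvd1 gcd_dvd2)+
    have "n dvd \<alpha> \<and> n dvd \<beta>"
    proof (cases "x = \<alpha>")
      case True
      have "\<beta> = l - \<alpha> - n" using sm by simp
      then show ?thesis using True nx nl by (simp add: dvd_diff_nat)
    next
      case False
      then have xb: "x = \<beta>" using that by simp
      have "\<alpha> = l - \<beta> - n" using sm by simp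
      then show ?thesis using xb nx nl by (simp add: dvd_diff_nat)
    qed
    then have "n dvd gcd (gcd \<alpha> \<beta>) l" using nl by simp
    then show False using g1 n2 by simp
  qed
  have "gcd \<alpha> l mod n \<le> 1"
    by (rule part3[OF H' A rn n2 _ a1 an an1 sm l0]) simp
  moreover have "gcd \<alpha> l mod n \<noteq> 0" using nd[of \<alpha>] by (metis mod_0_imp_dvd)
  ultimately show "gcd \<alpha> l mod (r - 2) = 1" unfolding n_def by simp
  have "\<beta> + \<alpha> + n = l" using sm by simp
  have "gcd \<beta> l mod n \<le> 1"
    by (rule part3[OF H' A rn n2 _ a1 an1 an \<open>\<beta> + \<alpha> + n = l\<close> l0]) simp
  moreover have "gcd \<beta> l mod n \<noteq> 0" using nd[of \<beta>] by (metis mod_0_imp_dvd)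
  ultimately show "gcd \<beta> l mod (r - 2) = 1" unfolding n_def by simp
qed

end
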